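(* Let $\mathcal{X}$ be a set, $\mathsf{B}_{\mathcal{X}}=\{-1,1\}^{\mathcal{X}}$, and let $\mathcal{U}_{\mathcal{X}}$ be the set of all unit covariances on $\mathcal{X}$, viewed as a (convex) subset of the real vector space $\mathscr{F}_{\mathcal{X}}$ of symmetric functions $\mathcal{X}\times\mathcal{X}\to\mathbb{R}$. Then the extreme points of $\mathcal{U}_{\mathcal{X}}$ are exactly the functions $u\otimes u$, $u\in\mathsf{B}_{\mathcal{X}}$, where $(u\otimes u)_{x,y}=u_xu_y$.
   Context: A unit field on $\mathcal{X}$ is a random element $X$ of $\mathsf{B}_{\mathcal{X}}=\{-1,1\}^{\mathcal{X}}$ (with the discrete structure). Its unit covariance is $\rho^X_{x,y}=\mathbf{E}[X_xX_y]=2\mathbb{P}(X_x=X_y)-1$, $x,y\in\mathcal{X}$. A symmetric function $\rho$ is a unit covariance if $\rho=\rho^X$ for some unit field $X$. An extreme point of a convex set $C$ is a point $x\in C$ such that whenever $x\in[y,z]$ with $y,z\in C$, then $x=y$ or $x=z$. *)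

theory Defs
  imports "HOL-Probability.Probability"
begin

definition sign_config :: "('a \<Rightarrow> real) \<Rightarrow> bool" where
  "sign_config u \<longleftrightarrow> (\<forall>x. u x \<in> {-1, 1})"

text \<open>A unit field on X (the type 'a), defined on a probability space M: a random element
  of {-1,1}^X, i.e. every coordinate is a random variable with values in {-1,1}
  (product of the discrete structures on {-1,1}).\<close>
definition unit_field :: "'b measure \<Rightarrow> ('b \<Rightarrow> 'a \<Rightarrow> real) \<Rightarrow> bool" where
  "unit_field M X \<longleftrightarrow> prob_space M \<and>
     (\<forall>x. (\<lambda>\<omega>. X \<omega> x) \<in> borel_measurable M) \<and>
     (\<forall>\<omega>\<in>space M. sign_config (X \<omega>))"

definition unit_covariance :: "'b measure \<Rightarrow> ('b \<Rightarrow> 'a \<Rightarrow> real) \<Rightarrow> 'a \<Rightarrow> 'a \<Rightarrow> real" where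
  "unit_covariance M X = (\<lambda>x y. integral\<^sup>L M (\<lambda>\<omega>. X \<omega> x * X \<omega> y))"

text \<open>The sample space is taken to be
  {-1,1}^X itself (type 'a => real); every unit field can be replaced by its law there,
  so this is no loss of generality (HOL cannot quantify over sample-space types).\<close>
definition unit_covariances :: "('a \<Rightarrow> 'a \<Rightarrow> real) set" where
  "unit_covariances = {\<rho>. \<exists>(M :: ('a \<Rightarrow> real) measure) X. unit_field M X \<and> \<rho> = unit_covariance M X}"

definition fsegment :: "('a \<Rightarrow> 'a \<Rightarrow> real) \<Rightarrow> ('a \<Rightarrow> 'a \<Rightarrow> real) \<Rightarrow> ('a \<Rightarrow> 'a \<Rightarrow> real) set" where
  "fsegment s t = {(\<lambda>x y. (1 - \<theta>) * s x y + \<theta> * t x y) | \<theta>. 0 \<le> \<theta> \<and> \<theta> \<le> 1}"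

definition fextreme_point :: "('a \<Rightarrow> 'a \<Rightarrow> real) \<Rightarrow> ('a \<Rightarrow> 'a \<Rightarrow> real) set \<Rightarrow> bool" where
  "fextreme_point r C \<longleftrightarrow> r \<in> C \<and>
     (\<forall>s\<in>C. \<forall>t\<in>C. r \<in> fsegment s t \<longrightarrow> r = s \<or> r = t)"

definition tensor_sq :: "('a \<Rightarrow> real) \<Rightarrow> 'a \<Rightarrow> 'a \<Rightarrow> real" where
  "tensor_sq u = (\<lambda>x y. u x * u y)"

end

theory Submission imports Defs begin

lemma uf_meas: "unit_field M X \<Longrightarrow> (\<lambda>\<omega>. X \<omega> x) \<in> borel_measurable M"
  by (simp add: unit_field_def)

lemma uf_val: "unit_field M X \<Longrightarrow> \<omega> \<in> space M \<Longrightarrow> X \<omega> x = 1 \<or> X \<omega> x = -1"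
  by (auto simp: unit_field_def sign_config_def)

lemma uf_prod_val: assumes "unit_field M X" "\<omega> \<in> space M"
  shows "X \<omega> x * X \<omega> y = 1 \<or> X \<omega> x * X \<omega> y = -1"
  using uf_val[OF assms, of x] uf_val[OF assms, of y] by auto

lemma uf_prod_abs: assumes "unit_field M X" "\<omega> \<in> space M"
  shows "\<bar>X \<omega> x * X \<omega> y\<bar> = 1"
  using uf_prod_val[OF assms, of x y] by auto

lemma uf_prod_int:
  assumes "unit_field M X"
  shows "integrable M (\<lambda>\<omega>. X \<omega> x * X \<omega> y)"
proof -
  interpret prob_space M using assms by (simp add: unit_field_def)
  show ?thesis
  proof (rule integrable_const_bound[where B=1])
    show "AE \<omega> in M. norm (X \<omega> x * X \<omega> y) \<le> 1"
      by (rule AE_I2) (simp add: uf_prod_abs[OF assms])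
    show "(\<lambda>\<omega>. X \<omega> x * X \<omega> y) \<in> borel_measurable M"
      using uf_meas[OF assms] by simp
  qed
qed

lemma cov_bound:
  assumes "\<rho> \<in> unit_covariances" shows "\<bar>\<rho> x y\<bar> \<le> 1"
proof -
  obtain M :: "('a \<Rightarrow> real) measure" and X where uf: "unit_field M X" and r: "\<rho> = unit_covariance M X"
    using assms by (auto simp: unit_covariances_def)
  have ps: "prob_space M" using uf by (simp add: unit_field_def)
  have "\<bar>integral\<^sup>L M (\<lambda>\<omega>. X \<omega> x * X \<omega> y)\<bar> \<le> integral\<^sup>L M (\<lambda>\<omega>. \<bar>X \<omega> x * X \<omega> y\<bar>)"
    by (rule integral_abs_bound)
  also have "\<dots> = integral\<^sup>L M (\<lambda>_. 1)"
    by (rule Bochner_Integration.integral_cong) (simp_all add: uf_prod_abs[OF uf])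
  also have "\<dots> = 1" using prob_space.prob_space[OF ps] by simp
  finally show ?thesis by (simp add: r unit_covariance_def)
qed

lemma tensor_in: assumes "sign_config u" shows "tensor_sq u \<in> unit_covariances"
proof -
  let ?M = "return (count_space UNIV) u :: ('a \<Rightarrow> real) measure"
  have ps: "prob_space ?M" by (auto intro: prob_space_return)
  have "unit_field ?M (\<lambda>_. u)"
    unfolding unit_field_def using assms ps by auto
  moreover have "tensor_sq u = unit_covariance ?M (\<lambda>_. u)"
    using prob_space.prob_space[OF ps] by (simp add: tensor_sq_def unit_covariance_def)
  ultimately show ?thesis unfolding unit_covariances_def by blast
qed

lemma seg_aux:
  fixes a b th :: real
  assumes "\<bar>a\<bar> \<le> 1" "\<bar>b\<bar> \<le> 1" "0 < th" "th < 1" "(1-th)*a + th*b = 1"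
  shows "a = 1"
proof -
  have "(1-th)*(1-a) + th*(1-b) = 0" using assms(5) by (simp add: algebra_simps)
  moreover have "(1-th)*(1-a) \<ge> 0" "th*(1-b) \<ge> 0" using assms by auto
  ultimately have "(1-th)*(1-a) = 0" by linarith
  then show ?thesis using assms by simp
qed

lemma tensor_extreme: assumes "sign_config u" shows "fextreme_point (tensor_sq u) unit_covariances"
  unfolding fextreme_point_def
proof (intro conjI ballI impI)
  show "tensor_sq u \<in> unit_covariances" by (rule tensor_in[OF assms])
  fix s t assume s: "s \<in> unit_covariances" and t: "t \<in> unit_covariances"
    and "tensor_sq u \<in> fsegment s t"
  then obtain th where th: "0 \<le> th" "th \<le> 1" and eq: "tensor_sq u = (\<lambda>x y. (1 - th) * s x y + th * t x y)"
    by (auto simp: fsegment_def)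
  show "tensor_sq u = s \<or> tensor_sq u = t"
  proof (cases "th = 0 \<or> th = 1")
    case True then show ?thesis using eq by auto
  next
    case False
    then have th': "0 < th" "th < 1" using th by auto
    have "tensor_sq u x y = s x y" for x y
    proof -
      have e: "u x * u y = (1 - th) * s x y + th * t x y" using fun_cong[OF fun_cong[OF eq, of x], of y]
        by (simp add: tensor_sq_def)
      have bs: "\<bar>s x y\<bar> \<le> 1" "\<bar>t x y\<bar> \<le> 1" using cov_bound[OF s] cov_bound[OF t] by auto
      have "u x = 1 \<or> u x = -1" "u y = 1 \<or> u y = -1" using assms by (auto simp: sign_config_def)
      then have "u x * u y = 1 \<or> u x * u y = -1" by auto
      then show ?thesis
      proof
        assume "u x * u y = 1" then show ?thesis using seg_aux[OF bs th'] e by (simp add: tensor_sq_def)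
      next
        assume h: "u x * u y = -1"
        have "(1-th)*(- s x y) + th*(- t x y) = 1" using e h by (simp add: algebra_simps)
        then have "- s x y = 1" using seg_aux[of "- s x y" "- t x y", OF _ _ th'] bs by simp
        then show ?thesis using h by (simp add: tensor_sq_def)
      qed
    qed
    then show ?thesis by blast
  qed
qed

lemma cond_field:
  assumes uf: "unit_field M X" and A: "A \<in> sets M" and p: "measure M A = p" "0 < p"
  shows "unit_field (density M (\<lambda>\<omega>. ennreal (indicator A \<omega> / p))) X"
    and "f \<in> borel_measurable M \<Longrightarrow>
      integral\<^sup>L (density M (\<lambda>\<omega>. ennreal (indicator A \<omega> / p))) f
      = (1/p) * integral\<^sup>L M (\<lambda>\<omega>. f \<omega> * indicator A \<omega>)"
proof -
  interpret prob_space M using uf by (simp add: unit_field_def)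
  let ?g = "\<lambda>\<omega>. indicator A \<omega> / p"
  have gm: "?g \<in> borel_measurable M" using A by simp
  have "emeasure (density M ?g) (space M) = (\<integral>\<^sup>+\<omega>. ennreal (?g \<omega>) * indicator (space M) \<omega> \<partial>M)"
    by (rule emeasure_density) (use gm in auto)
  also have "\<dots> = (\<integral>\<^sup>+\<omega>. ennreal (1/p) * indicator A \<omega> \<partial>M)"
    by (rule nn_integral_cong) (auto simp: indicator_def)
  also have "\<dots> = ennreal (1/p) * emeasure M A" by (rule nn_integral_cmult_indicator[OF A])
  also have "\<dots> = 1" using p by (simp add: emeasure_eq_measure ennreal_mult'[symmetric])
  finally have ps: "prob_space (density M ?g)" by (intro prob_spaceI) simp
  show "unit_field (density M ?g) X" using ps uf by (simp add: unit_field_def)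
  assume fm: "f \<in> borel_measurable M"
  have "integral\<^sup>L (density M ?g) f = integral\<^sup>L M (\<lambda>\<omega>. ?g \<omega> *\<^sub>R f \<omega>)"
    by (rule integral_density[OF fm gm]) (use p in auto)
  also have "\<dots> = integral\<^sup>L M (\<lambda>\<omega>. (1/p) * (f \<omega> * indicator A \<omega>))"
    by (rule Bochner_Integration.integral_cong) (auto simp: indicator_def)
  also have "\<dots> = (1/p) * integral\<^sup>L M (\<lambda>\<omega>. f \<omega> * indicator A \<omega>)" by simp
  finally show "integral\<^sup>L (density M ?g) f = (1/p) * integral\<^sup>L M (\<lambda>\<omega>. f \<omega> * indicator A \<omega>)" .
qed


lemma extreme_tensor:
  assumes ext: "fextreme_point \<rho> unit_covariances"
  shows "\<exists>u. \<rho> = tensor_sq u \<and> sign_config u"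
proof -
  have rU: "\<rho> \<in> unit_covariances" using ext by (simp add: fextreme_point_def)
  obtain M :: "('a \<Rightarrow> real) measure" and X where uf: "unit_field M X" and r: "\<rho> = unit_covariance M X"
    using rU by (auto simp: unit_covariances_def)
  interpret prob_space M using uf by (simp add: unit_field_def)
  define x0 :: 'a where "x0 = undefined"
  define Z where "Z x \<omega> = X \<omega> x0 * X \<omega> x" for x \<omega>
  have Zm: "Z x \<in> borel_measurable M" for x
    unfolding Z_def using uf_meas[OF uf, of x0] uf_meas[OF uf, of x] by simp
  have Zint: "integrable M (Z x)" for x
    unfolding Z_def by (rule uf_prod_int[OF uf])
  have Zv: "Z x \<omega> = 1 \<or> Z x \<omega> = -1" if "\<omega> \<in> space M" for x \<omega>
    unfolding Z_def by (rule uf_prod_val[OF uf that])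
  have rZ: "\<rho> x0 x = expectation (Z x)" for x
    unfolding r unit_covariance_def by (simp add: Z_def[abs_def])
  have key: "\<rho> x0 x = 1 \<or> \<rho> x0 x = -1" for x
  proof -
    define A where "A = {\<omega>\<in>space M. Z x \<omega> = 1}"
    define B where "B = space M - A"
    have A: "A \<in> sets M" unfolding A_def using Zm[of x] by measurable
    have B: "B \<in> sets M" unfolding B_def using A by auto
    define p where "p = prob A"
    have pB: "prob B = 1 - p" unfolding B_def p_def by (rule prob_compl[OF A])
    have p01: "0 \<le> p" "p \<le> 1" unfolding p_def by auto
    have ZA: "Z x \<omega> = 2 * indicator A \<omega> - 1" if "\<omega> \<in> space M" for \<omega>
      using Zv[OF that, of x] that by (auto simp: A_def indicator_def)
    have "expectation (Z x) = expectation (\<lambda>\<omega>. 2 * indicator A \<omega> - 1)"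
      by (rule Bochner_Integration.integral_cong) (use ZA in auto)
    also have "\<dots> = expectation (\<lambda>\<omega>. 2 * indicator A \<omega>) - expectation (\<lambda>_. 1)"
      by (rule Bochner_Integration.integral_diff) (use A in \<open>auto intro!: integrable_mult_right simp: emeasure_eq_measure\<close>)
    also have "\<dots> = 2 * p - 1"
      using A by (simp add: p_def prob_space Int_absorb2 sets.sets_into_space)
    finally have rp: "\<rho> x0 x = 2 * p - 1" using rZ by simp
    show ?thesis
    proof (cases "p = 0 \<or> p = 1")
      case True then show ?thesis using rp by auto
    next
      case False
      then have p0: "0 < p" "p < 1" using p01 by auto
      have q0: "0 < 1 - p" using p0 by simp
      let ?NA = "density M (\<lambda>\<omega>. ennreal (indicator A \<omega> / p))"
      let ?NB = "density M (\<lambda>\<omega>. ennreal (indicator B \<omega> / (1 - p)))"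
      have ufA: "unit_field ?NA X" and intA: "\<And>f. f \<in> borel_measurable M \<Longrightarrow>
          integral\<^sup>L ?NA f = (1/p) * integral\<^sup>L M (\<lambda>\<omega>. f \<omega> * indicator A \<omega>)"
        using cond_field[OF uf A _ p0(1)] p_def by auto
      have ufB: "unit_field ?NB X" and intB: "\<And>f. f \<in> borel_measurable M \<Longrightarrow>
          integral\<^sup>L ?NB f = (1/(1-p)) * integral\<^sup>L M (\<lambda>\<omega>. f \<omega> * indicator B \<omega>)"
        using cond_field[OF uf B _ q0] pB by auto
      define sA where "sA = unit_covariance ?NA X"
      define sB where "sB = unit_covariance ?NB X"
      have sAU: "sA \<in> unit_covariances" unfolding sA_def unit_covariances_def using ufA by blast
      have sBU: "sB \<in> unit_covariances" unfolding sB_def unit_covariances_def using ufB by blast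
      have fm: "(\<lambda>\<omega>. X \<omega> y * X \<omega> z) \<in> borel_measurable M" for y z
        using uf_meas[OF uf, of y] uf_meas[OF uf, of z] by simp
      have sAe: "sA y z = (1/p) * integral\<^sup>L M (\<lambda>\<omega>. X \<omega> y * X \<omega> z * indicator A \<omega>)" for y z
        unfolding sA_def unit_covariance_def by (rule intA[OF fm])
      have sBe: "sB y z = (1/(1-p)) * integral\<^sup>L M (\<lambda>\<omega>. X \<omega> y * X \<omega> z * indicator B \<omega>)" for y z
        unfolding sB_def unit_covariance_def by (rule intB[OF fm])
      have comb: "\<rho> = (\<lambda>y z. (1 - p) * sB y z + p * sA y z)"
      proof (intro HOL.ext)
        fix y z
        let ?f = "\<lambda>\<omega>. X \<omega> y * X \<omega> z"
        have i: "integrable M ?f" by (rule uf_prod_int[OF uf])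
        have "(1 - p) * sB y z + p * sA y z =
              integral\<^sup>L M (\<lambda>\<omega>. ?f \<omega> * indicator B \<omega>) + integral\<^sup>L M (\<lambda>\<omega>. ?f \<omega> * indicator A \<omega>)"
          using p0 q0 by (simp add: sAe sBe)
        also have "\<dots> = integral\<^sup>L M (\<lambda>\<omega>. ?f \<omega> * indicator B \<omega> + ?f \<omega> * indicator A \<omega>)"
          by (rule Bochner_Integration.integral_add[symmetric])
             (auto intro!: integrable_real_mult_indicator[OF A i] integrable_real_mult_indicator[OF B i])
        also have "\<dots> = integral\<^sup>L M ?f"
          by (rule Bochner_Integration.integral_cong) (auto simp: B_def indicator_def)
        finally show "\<rho> y z = (1 - p) * sB y z + p * sA y z" by (simp add: r unit_covariance_def)
      qed
      have "\<rho> \<in> fsegment sB sA" unfolding fsegment_def comb using p0 by auto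
      then have "\<rho> = sB \<or> \<rho> = sA" using ext sAU sBU by (auto simp: fextreme_point_def)
      moreover have "sA x0 x = 1"
      proof -
        have "integral\<^sup>L M (\<lambda>\<omega>. X \<omega> x0 * X \<omega> x * indicator A \<omega>) = integral\<^sup>L M (indicator A)"
          by (rule Bochner_Integration.integral_cong) (auto simp: A_def Z_def indicator_def)
        also have "\<dots> = p" using A by (simp add: p_def Int_absorb2 sets.sets_into_space)
        finally show ?thesis using p0 by (simp add: sAe)
      qed
      moreover have "sB x0 x = -1"
      proof -
        have "integral\<^sup>L M (\<lambda>\<omega>. X \<omega> x0 * X \<omega> x * indicator B \<omega>) = integral\<^sup>L M (\<lambda>\<omega>. - indicator B \<omega>)"
          by (rule Bochner_Integration.integral_cong)
             (use Zv in \<open>auto simp: A_def B_def Z_def indicator_def\<close>)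
        also have "\<dots> = - (1 - p)" using B pB by (simp add: Int_absorb2 sets.sets_into_space)
        finally show ?thesis using q0 by (simp add: sBe field_simps)
      qed
      ultimately show ?thesis using rp p0 by auto
    qed
  qed
  define u where "u x = \<rho> x0 x" for x
  have su: "sign_config u" using key by (auto simp: sign_config_def u_def)
  have AEZ: "AE \<omega> in M. Z x \<omega> = u x" for x
  proof (cases "u x = 1")
    case True
    have "integral\<^sup>L M (\<lambda>\<omega>. 1 - Z x \<omega>) = 0" using True Zint[of x] rZ[of x] by (simp add: u_def prob_space)
    moreover have "AE \<omega> in M. 0 \<le> 1 - Z x \<omega>" (is "AE \<omega> in M. 0 \<le> ?c \<omega>") proof (rule AE_I2)
      fix \<omega> assume "\<omega> \<in> space M"
      from Zv[OF this, of x] show "0 \<le> ?c \<omega>" by auto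
    qed
    ultimately have "AE \<omega> in M. 1 - Z x \<omega> = 0"
      using integral_nonneg_eq_0_iff_AE[of M "\<lambda>\<omega>. 1 - Z x \<omega>"] Zint[of x] by auto
    then show ?thesis using True by auto
  next
    case False
    then have F: "u x = -1" using key by (auto simp: u_def)
    have "integral\<^sup>L M (\<lambda>\<omega>. 1 + Z x \<omega>) = 0" using F Zint[of x] rZ[of x] by (simp add: u_def prob_space)
    moreover have "AE \<omega> in M. 0 \<le> 1 + Z x \<omega>" (is "AE \<omega> in M. 0 \<le> ?c \<omega>") proof (rule AE_I2)
      fix \<omega> assume "\<omega> \<in> space M"
      from Zv[OF this, of x] show "0 \<le> ?c \<omega>" by auto
    qed
    ultimately have "AE \<omega> in M. 1 + Z x \<omega> = 0"
      using integral_nonneg_eq_0_iff_AE[of M "\<lambda>\<omega>. 1 + Z x \<omega>"] Zint[of x] by auto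
    then show ?thesis using F by auto
  qed
  have "\<rho> y z = u y * u z" for y z
  proof -
    have "\<rho> y z = integral\<^sup>L M (\<lambda>\<omega>. Z y \<omega> * Z z \<omega>)"
      unfolding r unit_covariance_def
    proof (rule Bochner_Integration.integral_cong)
      fix \<omega> assume w: "\<omega> \<in> space M"
      have "X \<omega> x0 * X \<omega> x0 = 1" using uf_val[OF uf w, of x0] by auto
      then show "X \<omega> y * X \<omega> z = Z y \<omega> * Z z \<omega>" unfolding Z_def
        by (metis mult.assoc mult.commute mult.left_commute mult_1)
    qed simp
    also have "\<dots> = integral\<^sup>L M (\<lambda>\<omega>. u y * u z)"
      by (rule integral_cong_AE) (use Zm AEZ[of y] AEZ[of z] in auto)
    also have "\<dots> = u y * u z" by (simp add: prob_space)
    finally show ?thesis .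
  qed
  then have "\<rho> = tensor_sq u" by (auto simp: tensor_sq_def)
  then show ?thesis using su by blast
qed

theorem proposition1:
  "{\<rho> :: 'a \<Rightarrow> 'a \<Rightarrow> real. fextreme_point \<rho> unit_covariances} =
   {tensor_sq u | u. sign_config u}"
  using extreme_tensor tensor_extreme by blast

end
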